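(* Let $0<\sigma\le 1$ and let $(u,m)$ be the classical solution of the system \[ \begin{cases} u_t + \frac{\sigma^2}{2} u_{xx} - ru + G(u_x,m)^2 = 0, & 0<t<T,\ 0<x<L,\\ m_t - \frac{\sigma^2}{2} m_{xx} - \{G(u_x,m)m\}_x = 0, & 0<t<T,\ 0<x<L,\\ m(0,x)=m_0(x),\quad u(T,x)=u_T(x), & 0\le x\le L,\\ u_x(t,0)=u_x(t,L)=0, & 0\le t\le T,\\ \frac{\sigma^2}{2} m_x(t,x) + G(u_x,m)m(t,x) = 0, & 0\le t\le T,\ x\in\{0,L\}, \end{cases} \] where $G(u_x,m)(t,x) := \frac12\left(b + c\int_0^L u_x(t,y)m(t,y)\,dy - u_x(t,x)\right)$. Then \[ \sigma^2\left(\int_0^T\!\!\int_0^L \frac{|m_x|^2}{m+1}\,dx\,dt\right)^{1/2}\le C, \] where $C$ does not depend on $\sigma$.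
   Context: Standing setting: $L,T,r>0$ are constants, $\epsilon>0$, and $b=\frac{2}{2+\epsilon}$, $c=\frac{\epsilon}{2+\epsilon}$. The data satisfy: $u_T,m_0\in C^{2+\gamma}([0,L])$ for some $\gamma>0$; $u_T'(0)=u_T'(L)=0$ and $m_0(0)=m_0'(0)=m_0(L)=m_0'(L)=0$; $m_0$ is a probability density on $[0,L]$; $u_T\ge 0$. Constants may depend on $u_T,m_0,L,T,r,\epsilon$ but not on $\sigma\in(0,1]$. *)

theory Defs
  imports "HOL-Analysis.Analysis"
begin

definition bcoef :: "real \<Rightarrow> real" where "bcoef \<epsilon> = 2 / (2 + \<epsilon>)"
definition ccoef :: "real \<Rightarrow> real" where "ccoef \<epsilon> = \<epsilon> / (2 + \<epsilon>)"

definition C2gamma :: "real \<Rightarrow> real \<Rightarrow> (real \<Rightarrow> real) \<Rightarrow> bool" where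
  "C2gamma L \<gamma> f \<longleftrightarrow> (\<exists>f1 f2 H.
     (\<forall>x\<in>{0..L}. (f has_real_derivative f1 x) (at x within {0..L}))
   \<and> (\<forall>x\<in>{0..L}. (f1 has_real_derivative f2 x) (at x within {0..L}))
   \<and> continuous_on {0..L} f2
   \<and> (\<forall>x\<in>{0..L}. \<forall>y\<in>{0..L}. \<bar>f2 x - f2 y\<bar> \<le> H * \<bar>x - y\<bar> powr \<gamma>))"

definition Gterm :: "real \<Rightarrow> real \<Rightarrow> (real \<Rightarrow> real \<Rightarrow> real) \<Rightarrow> (real \<Rightarrow> real \<Rightarrow> real)
    \<Rightarrow> real \<Rightarrow> real \<Rightarrow> real" where
  "Gterm \<epsilon> L ux m t x =
     (1/2) * (bcoef \<epsilon> + ccoef \<epsilon> * integral {0..L} (\<lambda>y. ux t y * m t y) - ux t x)"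

definition classical_solution ::
  "real \<Rightarrow> real \<Rightarrow> real \<Rightarrow> real \<Rightarrow> real \<Rightarrow> (real \<Rightarrow> real) \<Rightarrow> (real \<Rightarrow> real)
   \<Rightarrow> (real \<Rightarrow> real \<Rightarrow> real) \<Rightarrow> (real \<Rightarrow> real \<Rightarrow> real) \<Rightarrow> bool" where
  "classical_solution L T r \<epsilon> \<sigma> uT m0 u m \<longleftrightarrow>
   (\<exists>ut ux uxx mt mx mxx.
      (\<forall>t\<in>{0..T}. \<forall>x\<in>{0..L}.
          ((\<lambda>s. u s x) has_real_derivative ut t x) (at t within {0..T})
        \<and> ((\<lambda>y. u t y) has_real_derivative ux t x) (at x within {0..L})
        \<and> ((\<lambda>y. ux t y) has_real_derivative uxx t x) (at x within {0..L})
        \<and> ((\<lambda>s. m s x) has_real_derivative mt t x) (at t within {0..T})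
        \<and> ((\<lambda>y. m t y) has_real_derivative mx t x) (at x within {0..L})
        \<and> ((\<lambda>y. mx t y) has_real_derivative mxx t x) (at x within {0..L}))
    \<and> continuous_on ({0..T} \<times> {0..L}) (\<lambda>(t,x). u t x)
    \<and> continuous_on ({0..T} \<times> {0..L}) (\<lambda>(t,x). ut t x)
    \<and> continuous_on ({0..T} \<times> {0..L}) (\<lambda>(t,x). ux t x)
    \<and> continuous_on ({0..T} \<times> {0..L}) (\<lambda>(t,x). uxx t x)
    \<and> continuous_on ({0..T} \<times> {0..L}) (\<lambda>(t,x). m t x)
    \<and> continuous_on ({0..T} \<times> {0..L}) (\<lambda>(t,x). mt t x)
    \<and> continuous_on ({0..T} \<times> {0..L}) (\<lambda>(t,x). mx t x)
    \<and> continuous_on ({0..T} \<times> {0..L}) (\<lambda>(t,x). mxx t x)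
    \<and> (\<forall>t\<in>{0<..<T}. \<forall>x\<in>{0<..<L}.
          ut t x + \<sigma>\<^sup>2 / 2 * uxx t x - r * u t x + (Gterm \<epsilon> L ux m t x)\<^sup>2 = 0)
    \<and> (\<forall>t\<in>{0<..<T}. \<forall>x\<in>{0<..<L}.
          ((\<lambda>y. Gterm \<epsilon> L ux m t y * m t y) has_real_derivative
              (mt t x - \<sigma>\<^sup>2 / 2 * mxx t x)) (at x))
    \<and> (\<forall>x\<in>{0..L}. m 0 x = m0 x \<and> u T x = uT x)
    \<and> (\<forall>t\<in>{0..T}. ux t 0 = 0 \<and> ux t L = 0)
    \<and> (\<forall>t\<in>{0..T}. \<forall>x\<in>{0, L}. \<sigma>\<^sup>2 / 2 * mx t x + Gterm \<epsilon> L ux m t x * m t x = 0))"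


end

theory Submission
  imports Defs
begin

lemma slice_cont:
  fixes f :: "real \<Rightarrow> real \<Rightarrow> real"
  assumes "continuous_on ({0..T} \<times> {0..L}) (\<lambda>(t,x). f t x)" "t \<in> {0..T}"
  shows "continuous_on {0..L} (f t)"
proof -
  have "continuous_on {0..L} ((\<lambda>(t,x). f t x) \<circ> (\<lambda>x. (t,x)))"
    by (rule continuous_on_compose) (use assms(2) in \<open>auto intro!: continuous_intros continuous_on_subset[OF assms(1)]\<close>)
  then show ?thesis by (simp add: o_def)
qed

lemma int_cont:
  fixes f :: "real \<Rightarrow> real \<Rightarrow> real"
  assumes "continuous_on ({0..T} \<times> {0..L}) (\<lambda>(t,x). f t x)"
  shows "continuous_on {0..T} (\<lambda>t. integral {0..L} (f t))"
  using integral_continuous_on_param[of "{0..T}" 0 L f] assms by simp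

lemma int_deriv:
  fixes \<Phi> \<Phi>t :: "real \<Rightarrow> real \<Rightarrow> real"
  assumes "\<And>t x. t \<in> {0..T} \<Longrightarrow> x \<in> {0..L} \<Longrightarrow> ((\<lambda>s. \<Phi> s x) has_real_derivative \<Phi>t t x) (at t within {0..T})"
    and "continuous_on ({0..T} \<times> {0..L}) (\<lambda>(t,x). \<Phi> t x)"
    and "continuous_on ({0..T} \<times> {0..L}) (\<lambda>(t,x). \<Phi>t t x)"
    and "t0 \<in> {0..T}"
  shows "((\<lambda>t. integral {0..L} (\<Phi> t)) has_real_derivative integral {0..L} (\<Phi>t t0)) (at t0 within {0..T})"
  using leibniz_rule_field_derivative[of "{0..T}" 0 L \<Phi> \<Phi>t t0] assms
    integrable_continuous_interval[OF slice_cont[OF assms(2)]]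
  by simp

lemma ibp:
  fixes f g f' g' :: "real \<Rightarrow> real"
  assumes "a \<le> b" "continuous_on {a..b} f" "continuous_on {a..b} g"
    "\<And>x. x \<in> {a<..<b} \<Longrightarrow> (f has_real_derivative f' x) (at x)"
    "\<And>x. x \<in> {a<..<b} \<Longrightarrow> (g has_real_derivative g' x) (at x)"
    "continuous_on {a..b} (\<lambda>x. f x * g' x)"
  shows "((\<lambda>x. f' x * g x) has_integral (f b * g b - f a * g a - integral {a..b} (\<lambda>x. f x * g' x))) {a..b}"
  apply (rule integration_by_parts_interior[OF bounded_bilinear_mult, of a b f g f' g'])
  using assms integrable_continuous_interval[OF assms(6)]
  by (auto simp: has_real_derivative_iff_has_vector_derivative[symmetric])

lemma le_closed:
  fixes f :: "real \<Rightarrow> real"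
  assumes "continuous_on {a..b} f" "a < b" "\<And>x. x \<in> {a<..<b} \<Longrightarrow> f x \<le> c" "x \<in> {a..b}"
  shows "f x \<le> c"
  using continuous_le_on_closure[of "{a<..<b}" f x c] assms by simp

lemma decr:
  fixes F F' :: "real \<Rightarrow> real"
  assumes "continuous_on {a..b} F" "\<And>t. t \<in> {a<..<b} \<Longrightarrow> (F has_real_derivative F' t) (at t)"
    "\<And>t. t \<in> {a<..<b} \<Longrightarrow> F' t \<le> 0" "a \<le> s" "s \<le> t" "t \<le> b"
  shows "F t \<le> F s"
  apply (rule DERIV_nonpos_imp_decreasing_open[OF assms(5)])
  using assms by (auto intro: continuous_on_subset) (meson assms less_le_trans le_less_trans)

lemma cp_mult: "continuous_on S (\<lambda>(t,x). f t x) \<Longrightarrow> continuous_on S (\<lambda>(t,x). g t x) \<Longrightarrow>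
   continuous_on S (\<lambda>(t,x). (f t x :: real) * g t x)"
  by (simp add: case_prod_beta continuous_intros)
lemma cp_add: "continuous_on S (\<lambda>(t,x). f t x) \<Longrightarrow> continuous_on S (\<lambda>(t,x). g t x) \<Longrightarrow>
   continuous_on S (\<lambda>(t,x). (f t x :: real) + g t x)"
  by (simp add: case_prod_beta continuous_intros)
lemma cp_diff: "continuous_on S (\<lambda>(t,x). f t x) \<Longrightarrow> continuous_on S (\<lambda>(t,x). g t x) \<Longrightarrow>
   continuous_on S (\<lambda>(t,x). (f t x :: real) - g t x)"
  by (simp add: case_prod_beta continuous_intros)
lemma cp_const: "continuous_on S (\<lambda>(t,x). c)"
  by (simp add: case_prod_beta continuous_intros)
lemma cp_comp: "continuous_on A h \<Longrightarrow> continuous_on S (\<lambda>(t,x). f t x) \<Longrightarrow> (\<And>t x. (t,x) \<in> S \<Longrightarrow> f t x \<in> A) \<Longrightarrow>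
   continuous_on S (\<lambda>(t,x). (h (f t x) :: real))"
proof -
  assume a: "continuous_on A h" "continuous_on S (\<lambda>(t,x). f t x)" "\<And>t x. (t,x) \<in> S \<Longrightarrow> f t x \<in> A"
  have "continuous_on S (h \<circ> (\<lambda>(t,x). f t x))"
    by (rule continuous_on_compose[OF a(2)]) (rule continuous_on_subset[OF a(1)], use a(3) in auto)
  then show ?thesis by (simp add: o_def case_prod_beta)
qed

lemma hi_int:
  fixes f g :: "real \<Rightarrow> real"
  assumes "(f has_integral I) {a..b}" "\<And>x. x \<in> {a<..<b} \<Longrightarrow> g x = f x"
  shows "(g has_integral I) {a..b}"
  by (rule has_integral_spike_finite[of "{a,b}"]) (use assms in auto)

definition pw :: "nat \<Rightarrow> real \<Rightarrow> real" where "pw n z = (if z < 0 then z ^ n else 0)"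

lemma pw_deriv:
  assumes "n \<ge> 2"
  shows "(pw n has_real_derivative (of_nat n * pw (n - 1) z)) (at z)"
proof -
  consider "z < 0" | "z > 0" | "z = 0" by linarith
  then show ?thesis
  proof cases
    case 1
    have "((\<lambda>z. z ^ n) has_real_derivative of_nat n * pw (n - 1) z) (at z)"
      using 1 by (auto intro!: derivative_eq_intros simp: pw_def)
    then show ?thesis
      apply (rule has_field_derivative_transform_within_open[where S="{..<0}"])
      using 1 by (auto simp: pw_def)
  next
    case 2
    have "((\<lambda>z. 0) has_real_derivative of_nat n * pw (n - 1) z) (at z)" using 2 by (simp add: pw_def)
    then show ?thesis
      apply (rule has_field_derivative_transform_within_open[where S="{0<..}"])
      using 2 by (auto simp: pw_def)
  next
    case 3
    have lim: "((\<lambda>h. (pw n (0 + h) - pw n 0) / h) \<longlongrightarrow> 0) (at 0)"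
    proof (rule Lim_null_comparison)
      show "\<forall>\<^sub>F h in at 0. norm ((pw n (0 + h) - pw n 0) / h) \<le> \<bar>h\<bar> ^ (n - 1)"
      proof (rule always_eventually, intro allI)
        fix h :: real
        show "norm ((pw n (0 + h) - pw n 0) / h) \<le> \<bar>h\<bar> ^ (n - 1)"
        proof (cases "h < 0")
          case True
          have "h ^ n = h * h ^ (n - 1)" using assms by (metis Suc_diff_1 less_le_trans pos2 power_Suc)
          then show ?thesis using True by (simp add: pw_def abs_mult power_abs)
        qed (simp add: pw_def)
      qed
      have "isCont (\<lambda>h::real. \<bar>h\<bar> ^ (n - 1)) 0"
        by (intro continuous_intros)
      then have "((\<lambda>h::real. \<bar>h\<bar> ^ (n - 1)) \<longlongrightarrow> \<bar>0\<bar> ^ (n - 1)) (at 0)"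
        by (simp add: isCont_def)
      moreover have "\<bar>0::real\<bar> ^ (n - 1) = 0" using assms by simp
      ultimately show "((\<lambda>h::real. \<bar>h\<bar> ^ (n - 1)) \<longlongrightarrow> (0::real)) (at (0::real))"
        by (rule back_subst)
    qed
    have "pw (n - 1) 0 = 0" by (simp add: pw_def)
    then show ?thesis using lim 3 by (simp add: DERIV_def)
  qed
qed



locale sol =
  fixes L T r \<epsilon> \<sigma> :: real and u m ut ux uxx mt mx mxx :: "real \<Rightarrow> real \<Rightarrow> real"
    and uT m0 :: "real \<Rightarrow> real"
  assumes L: "L > 0" and T: "T > 0" and r: "r > 0" and eps: "\<epsilon> > 0" and sig: "\<sigma> > 0"
    and dut: "\<And>t x. t \<in> {0..T} \<Longrightarrow> x \<in> {0..L} \<Longrightarrow> ((\<lambda>s. u s x) has_real_derivative ut t x) (at t within {0..T})"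
    and dux: "\<And>t x. t \<in> {0..T} \<Longrightarrow> x \<in> {0..L} \<Longrightarrow> ((\<lambda>y. u t y) has_real_derivative ux t x) (at x within {0..L})"
    and duxx: "\<And>t x. t \<in> {0..T} \<Longrightarrow> x \<in> {0..L} \<Longrightarrow> ((\<lambda>y. ux t y) has_real_derivative uxx t x) (at x within {0..L})"
    and dmt: "\<And>t x. t \<in> {0..T} \<Longrightarrow> x \<in> {0..L} \<Longrightarrow> ((\<lambda>s. m s x) has_real_derivative mt t x) (at t within {0..T})"
    and dmx: "\<And>t x. t \<in> {0..T} \<Longrightarrow> x \<in> {0..L} \<Longrightarrow> ((\<lambda>y. m t y) has_real_derivative mx t x) (at x within {0..L})"
    and dmxx: "\<And>t x. t \<in> {0..T} \<Longrightarrow> x \<in> {0..L} \<Longrightarrow> ((\<lambda>y. mx t y) has_real_derivative mxx t x) (at x within {0..L})"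
    and cu: "continuous_on ({0..T} \<times> {0..L}) (\<lambda>(t,x). u t x)"
    and cut: "continuous_on ({0..T} \<times> {0..L}) (\<lambda>(t,x). ut t x)"
    and cux: "continuous_on ({0..T} \<times> {0..L}) (\<lambda>(t,x). ux t x)"
    and cuxx: "continuous_on ({0..T} \<times> {0..L}) (\<lambda>(t,x). uxx t x)"
    and cm: "continuous_on ({0..T} \<times> {0..L}) (\<lambda>(t,x). m t x)"
    and cmt: "continuous_on ({0..T} \<times> {0..L}) (\<lambda>(t,x). mt t x)"
    and cmx: "continuous_on ({0..T} \<times> {0..L}) (\<lambda>(t,x). mx t x)"
    and cmxx: "continuous_on ({0..T} \<times> {0..L}) (\<lambda>(t,x). mxx t x)"
    and ueq: "\<And>t x. t \<in> {0<..<T} \<Longrightarrow> x \<in> {0<..<L} \<Longrightarrow>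
          ut t x + \<sigma>\<^sup>2 / 2 * uxx t x - r * u t x + (Gterm \<epsilon> L ux m t x)\<^sup>2 = 0"
    and meq: "\<And>t x. t \<in> {0<..<T} \<Longrightarrow> x \<in> {0<..<L} \<Longrightarrow>
          ((\<lambda>y. Gterm \<epsilon> L ux m t y * m t y) has_real_derivative (mt t x - \<sigma>\<^sup>2 / 2 * mxx t x)) (at x)"
    and init: "\<And>x. x \<in> {0..L} \<Longrightarrow> m 0 x = m0 x"
    and termc: "\<And>x. x \<in> {0..L} \<Longrightarrow> u T x = uT x"
    and neu: "\<And>t. t \<in> {0..T} \<Longrightarrow> ux t 0 = 0 \<and> ux t L = 0"
    and rob: "\<And>t x. t \<in> {0..T} \<Longrightarrow> x \<in> {0, L} \<Longrightarrow> \<sigma>\<^sup>2 / 2 * mx t x + Gterm \<epsilon> L ux m t x * m t x = 0"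
    and m0pos: "\<And>x. x \<in> {0..L} \<Longrightarrow> m0 x \<ge> 0"
    and m0int: "integral {0..L} m0 = 1"
    and uTpos: "\<And>x. x \<in> {0..L} \<Longrightarrow> uT x \<ge> 0"
begin

definition G where "G t x = Gterm \<epsilon> L ux m t x"
definition J where "J t x = \<sigma>\<^sup>2 / 2 * mx t x + G t x * m t x"
definition Iu where "Iu t = integral {0..L} (\<lambda>y. ux t y * m t y)"
definition \<beta> where "\<beta> t = bcoef \<epsilon> + ccoef \<epsilon> * Iu t"

lemma G_alt: "G t x = (\<beta> t - ux t x) / 2"
  by (simp add: G_def Gterm_def \<beta>_def Iu_def)

lemma cIu: "continuous_on {0..T} Iu"
  unfolding Iu_def
  by (rule int_cont) (intro cp_mult cux cm)

lemma cfst: "continuous_on ({0..T} \<times> {0..L}) (\<lambda>(t,x). Iu t)"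
proof -
  have "continuous_on ({0..T} \<times> {0..L}) (Iu \<circ> fst)"
    by (rule continuous_on_compose) (auto intro!: continuous_intros intro: continuous_on_subset[OF cIu])
  then show ?thesis by (simp add: o_def case_prod_beta)
qed

lemma cG: "continuous_on ({0..T} \<times> {0..L}) (\<lambda>(t,x). G t x)"
proof -
  have "continuous_on ({0..T} \<times> {0..L}) (\<lambda>p. (bcoef \<epsilon> + ccoef \<epsilon> * (\<lambda>(t,x). Iu t) p - (\<lambda>(t,x). ux t x) p) / 2)"
    by (intro continuous_intros cfst cux) auto
  then show ?thesis by (simp add: case_prod_beta G_alt \<beta>_def field_simps)
qed

lemma cJ: "continuous_on ({0..T} \<times> {0..L}) (\<lambda>(t,x). J t x)"
proof -
  have "continuous_on ({0..T} \<times> {0..L}) (\<lambda>p. \<sigma>\<^sup>2 / 2 * (\<lambda>(t,x). mx t x) p + (\<lambda>(t,x). G t x) p * (\<lambda>(t,x). m t x) p)"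
    by (intro continuous_intros cG cm cmx)
  then show ?thesis by (simp add: case_prod_beta J_def)
qed

lemma int_at: "x \<in> {0<..<L} \<Longrightarrow> at x within {0..L} = at x"
  by (rule at_within_interior) auto

lemma int_att: "t \<in> {0<..<T} \<Longrightarrow> at t within {0..T} = at t"
  by (rule at_within_interior) auto

lemma dJ: assumes "t \<in> {0<..<T}" "x \<in> {0<..<L}"
  shows "(J t has_real_derivative mt t x) (at x)"
proof -
  have "((\<lambda>y. \<sigma>\<^sup>2 / 2 * mx t y + G t y * m t y) has_real_derivative (\<sigma>\<^sup>2 / 2 * mxx t x + (mt t x - \<sigma>\<^sup>2 / 2 * mxx t x))) (at x)"
  proof (rule DERIV_add)
    show "((\<lambda>y. \<sigma>\<^sup>2 / 2 * mx t y) has_real_derivative \<sigma>\<^sup>2 / 2 * mxx t x) (at x)"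
      by (rule DERIV_cmult) (use dmxx[of t x] int_at[OF assms(2)] assms in auto)
    show "((\<lambda>y. G t y * m t y) has_real_derivative mt t x - \<sigma>\<^sup>2 / 2 * mxx t x) (at x)"
      using meq[OF assms] by (simp add: G_def)
  qed
  then show ?thesis by (simp add: J_def[abs_def])
qed

lemma J0: "t \<in> {0..T} \<Longrightarrow> J t 0 = 0" and JL: "t \<in> {0..T} \<Longrightarrow> J t L = 0"
  using rob[of t 0] rob[of t L] by (auto simp: J_def G_def)

lemma Gbound: obtains K where "K > 0" "\<And>t x. t \<in> {0..T} \<Longrightarrow> x \<in> {0..L} \<Longrightarrow> \<bar>G t x\<bar> \<le> K"
proof -
  have "compact ((\<lambda>(t,x). G t x) ` ({0..T} \<times> {0..L}))"
    by (intro compact_continuous_image cG compact_Times compact_Icc)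
  then obtain B where B: "\<forall>y\<in>(\<lambda>(t,x). G t x) ` ({0..T} \<times> {0..L}). norm y \<le> B"
    using compact_imp_bounded bounded_iff by metis
  then have "\<And>t x. t \<in> {0..T} \<Longrightarrow> x \<in> {0..L} \<Longrightarrow> \<bar>G t x\<bar> \<le> \<bar>B\<bar> + 1"
  proof -
    fix t x assume "t \<in> {0..T}" "x \<in> {0..L}"
    then have "(t,x) \<in> {0..T} \<times> {0..L}" by auto
    then have "G t x \<in> (\<lambda>(t,x). G t x) ` ({0..T} \<times> {0..L})" by force
    with B have "norm (G t x) \<le> B" by blast
    then show "\<bar>G t x\<bar> \<le> \<bar>B\<bar> + 1" by simp
  qed
  then show ?thesis using that[of "\<bar>B\<bar> + 1"] by auto
qed

end


lemma pw_cont: "n \<ge> 2 \<Longrightarrow> continuous_on A (pw n)"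
  by (rule continuous_at_imp_continuous_on) (auto intro: DERIV_isCont pw_deriv)

lemma pw4_d: "(pw 4 has_real_derivative 4 * pw 3 z) (at z)"
  using pw_deriv[of 4 z] by simp
lemma pw3_d: "((\<lambda>z. 4 * pw 3 z) has_real_derivative 12 * pw 2 z) (at z)"
  using DERIV_cmult[OF pw_deriv[of 3 z], of 4] by simp

lemma pw_nonneg: "pw 4 z \<ge> 0" "pw 2 z \<ge> 0"
  by (auto simp: pw_def)
lemma pw_sq: "pw 2 z * z\<^sup>2 = pw 4 z"
  by (auto simp: pw_def power2_eq_square power4_eq_xxxx)
lemma pw4_zero: "pw 4 z = 0 \<Longrightarrow> z \<ge> 0"
  by (auto simp: pw_def split: if_splits)
lemma pw_pos_zero: "z \<ge> 0 \<Longrightarrow> pw n z = 0"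
  by (auto simp: pw_def)

lemma ineq_sq: fixes s a g :: real assumes "s > 0"
  shows "- (s\<^sup>2 / 2 * a\<^sup>2 + g * a) \<le> g\<^sup>2 / (2 * s\<^sup>2)"
proof -
  have "0 \<le> (s * a + g / s)\<^sup>2 / 2" by simp
  also have "(s * a + g / s)\<^sup>2 / 2 = s\<^sup>2 / 2 * a\<^sup>2 + g * a + g\<^sup>2 / (2 * s\<^sup>2)"
    using assms by (simp add: power2_eq_square field_simps)
  finally show ?thesis by linarith
qed

context sol begin

definition F1 where "F1 t = integral {0..L} (\<lambda>x. pw 4 (m t x))"

lemma cm_slice: "t \<in> {0..T} \<Longrightarrow> continuous_on {0..L} (m t)"
  by (rule slice_cont[OF cm])

lemma F1_deriv: "t \<in> {0..T} \<Longrightarrow> (F1 has_real_derivative integral {0..L} (\<lambda>x. 4 * pw 3 (m t x) * mt t x)) (at t within {0..T})"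
  unfolding F1_def[abs_def]
  apply (rule int_deriv[where \<Phi>t="\<lambda>t x. 4 * pw 3 (m t x) * mt t x"])
  subgoal for t x using DERIV_chain2[OF pw4_d dmt[of t x]] by (simp add: mult.assoc)
  subgoal by (rule cp_comp[OF pw_cont cm]) auto
  subgoal by (intro cp_mult cp_const cmt cp_comp[OF pw_cont cm]) auto
  by simp

lemma F1_cont: "continuous_on {0..T} F1"
  by (rule DERIV_continuous_on[OF F1_deriv])

lemma F1_int: assumes t: "t \<in> {0<..<T}"
  shows "integral {0..L} (\<lambda>x. 4 * pw 3 (m t x) * mt t x) =
     - integral {0..L} (\<lambda>x. J t x * (12 * pw 2 (m t x) * mx t x))"
proof -
  have tt: "t \<in> {0..T}" using t by auto
  have "((\<lambda>x. mt t x * (4 * pw 3 (m t x))) has_integral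
     (J t L * (4 * pw 3 (m t L)) - J t 0 * (4 * pw 3 (m t 0)) - integral {0..L} (\<lambda>x. J t x * (12 * pw 2 (m t x) * mx t x)))) {0..L}"
  proof (rule ibp)
    show "continuous_on {0..L} (J t)" by (rule slice_cont[OF cJ tt])
    show "continuous_on {0..L} (\<lambda>x. 4 * pw 3 (m t x))"
      by (intro continuous_intros continuous_on_compose2[OF pw_cont cm_slice[OF tt]]) auto
    show "(J t has_real_derivative mt t x) (at x)" if "x \<in> {0<..<L}" for x using dJ[OF t that] .
    show "((\<lambda>x. 4 * pw 3 (m t x)) has_real_derivative 12 * pw 2 (m t x) * mx t x) (at x)" if "x \<in> {0<..<L}" for x
      using DERIV_chain2[OF pw3_d dmx[of t x]] int_at[OF that] that tt by (simp add: mult.assoc)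
    have "continuous_on {0..L} (\<lambda>x. mx t x)" by (rule slice_cont[OF cmx tt])
    then show "continuous_on {0..L} (\<lambda>x. J t x * (12 * pw 2 (m t x) * mx t x))"
      by (intro continuous_intros slice_cont[OF cJ tt] continuous_on_compose2[OF pw_cont cm_slice[OF tt]]) auto
  qed (use L in auto)
  then show ?thesis using J0[OF tt] JL[OF tt] by (simp add: mult.commute mult.left_commute integral_unique)
qed

lemma m_nonneg: assumes "t \<in> {0..T}" "x \<in> {0..L}" shows "m t x \<ge> 0"
proof -
  obtain K where K: "K > 0" "\<And>t x. t \<in> {0..T} \<Longrightarrow> x \<in> {0..L} \<Longrightarrow> \<bar>G t x\<bar> \<le> K"
    using Gbound by blast
  define a where "a = 6 * K\<^sup>2 / \<sigma>\<^sup>2"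
  define H where "H t = exp (- a * t) * F1 t" for t
  have le: "integral {0..L} (\<lambda>x. 4 * pw 3 (m t x) * mt t x) \<le> a * F1 t" if t: "t \<in> {0<..<T}" for t
  proof -
    have tt: "t \<in> {0..T}" using t by auto
    have cmx': "continuous_on {0..L} (\<lambda>x. mx t x)" by (rule slice_cont[OF cmx tt])
    have "- integral {0..L} (\<lambda>x. J t x * (12 * pw 2 (m t x) * mx t x)) = integral {0..L} (\<lambda>x. - (J t x * (12 * pw 2 (m t x) * mx t x)))"
      by simp
    also have "\<dots> \<le> integral {0..L} (\<lambda>x. a * pw 4 (m t x))"
    proof (rule integral_le)
      show "(\<lambda>x. - (J t x * (12 * pw 2 (m t x) * mx t x))) integrable_on {0..L}"
        by (intro integrable_continuous_interval continuous_intros cmx' slice_cont[OF cJ tt] continuous_on_compose2[OF pw_cont cm_slice[OF tt]]) auto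
      show "(\<lambda>x. a * pw 4 (m t x)) integrable_on {0..L}"
        by (intro integrable_continuous_interval continuous_intros continuous_on_compose2[OF pw_cont cm_slice[OF tt]]) auto
      fix x assume x: "x \<in> {0..L}"
      have g: "\<bar>G t x\<bar> \<le> K" using K(2)[OF tt x] .
      have "(G t x * m t x)\<^sup>2 \<le> K\<^sup>2 * (m t x)\<^sup>2"
        using g by (simp add: power_mult_distrib mult_right_mono power_mono[of "\<bar>G t x\<bar>" K 2, simplified])
      then have b: "(G t x * m t x)\<^sup>2 / (2 * \<sigma>\<^sup>2) \<le> K\<^sup>2 * (m t x)\<^sup>2 / (2 * \<sigma>\<^sup>2)"
        by (simp add: divide_right_mono)
      have "- (J t x * (12 * pw 2 (m t x) * mx t x)) = 12 * pw 2 (m t x) * (- (\<sigma>\<^sup>2 / 2 * (mx t x)\<^sup>2 + (G t x * m t x) * mx t x))"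
        by (simp add: J_def power2_eq_square algebra_simps)
      also have "\<dots> \<le> 12 * pw 2 (m t x) * ((G t x * m t x)\<^sup>2 / (2 * \<sigma>\<^sup>2))"
        by (rule mult_left_mono[OF ineq_sq[OF sig]]) (use pw_nonneg in auto)
      also have "\<dots> \<le> 12 * pw 2 (m t x) * (K\<^sup>2 * (m t x)\<^sup>2 / (2 * \<sigma>\<^sup>2))"
        by (rule mult_left_mono[OF b]) (use pw_nonneg in auto)
      also have "\<dots> = a * (pw 2 (m t x) * (m t x)\<^sup>2)" by (simp add: a_def field_simps)
      also have "\<dots> = a * pw 4 (m t x)" by (simp add: pw_sq)
      finally show "- (J t x * (12 * pw 2 (m t x) * mx t x)) \<le> a * pw 4 (m t x)" .
    qed
    also have "\<dots> = a * F1 t" by (simp add: F1_def)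
    finally show ?thesis using F1_int[OF t] by simp
  qed
  have Hc: "continuous_on {0..T} H"
    unfolding H_def by (intro continuous_intros F1_cont)
  have Hd: "(H has_real_derivative exp (- a * t) * integral {0..L} (\<lambda>x. 4 * pw 3 (m t x) * mt t x) - a * (exp (- a * t) * F1 t)) (at t)"
    if t: "t \<in> {0<..<T}" for t
  proof -
    have "(F1 has_real_derivative integral {0..L} (\<lambda>x. 4 * pw 3 (m t x) * mt t x)) (at t)"
      using F1_deriv[of t] t int_att[OF t] by auto
    then show ?thesis unfolding H_def[abs_def]
      by (auto intro!: derivative_eq_intros simp: algebra_simps)
  qed
  have Hle: "H t \<le> H 0" if "t \<in> {0..T}" for t
  proof (rule decr[OF Hc Hd])
    fix s assume s: "s \<in> {0<..<T}"
    have "exp (- a * s) * integral {0..L} (\<lambda>x. 4 * pw 3 (m s x) * mt s x) \<le> exp (- a * s) * (a * F1 s)"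
      by (rule mult_left_mono[OF le[OF s]]) simp
    then show "exp (- a * s) * integral {0..L} (\<lambda>x. 4 * pw 3 (m s x) * mt s x) - a * (exp (- a * s) * F1 s) \<le> 0"
      by (simp add: algebra_simps)
  qed (use that in auto)
  have "F1 0 = integral {0..L} (\<lambda>x. 0)"
    unfolding F1_def by (rule integral_cong) (simp add: init pw_pos_zero m0pos)
  then have H0: "H 0 = 0" by (simp add: H_def)
  have tt: "t \<in> {0..T}" using assms by auto
  have "F1 t \<le> 0" using Hle[OF tt] H0 by (simp add: H_def mult_le_0_iff)
  moreover have "F1 t \<ge> 0" unfolding F1_def
    by (rule integral_nonneg) (auto intro!: integrable_continuous_interval continuous_on_compose2[OF pw_cont cm_slice[OF tt]] simp: pw_nonneg)
  ultimately have "F1 t = 0" by simp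
  then have "((\<lambda>x. pw 4 (m t x)) has_integral 0) (cbox 0 L)"
  proof -
    have "continuous_on {0..L} (\<lambda>x. pw 4 (m t x))"
      by (intro continuous_on_compose2[OF pw_cont cm_slice[OF tt]]) auto
    then have "(\<lambda>x. pw 4 (m t x)) integrable_on {0..L}" by (rule integrable_continuous_interval)
    then show ?thesis using \<open>F1 t = 0\<close> unfolding F1_def by (simp add: has_integral_integral)
  qed
  then have "pw 4 (m t x) = 0"
    by (rule has_integral_0_cbox_imp_0[rotated 2]) (use assms L in \<open>auto intro!: continuous_on_compose2[OF pw_cont cm_slice[OF tt]] simp: pw_nonneg\<close>)
  then show ?thesis by (rule pw4_zero)
qed

end


lemma pw3_nonpos: "pw 3 z \<le> 0"
  by (auto simp: pw_def power3_eq_cube) (metis less_imp_le mult_nonneg_nonpos zero_le_square)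
lemma sqnn: "(b::real) \<ge> 0 \<Longrightarrow> 0 \<le> a * (a * b)"
  by (metis mult.assoc mult_nonneg_nonneg zero_le_square)
lemma pw3_mul: "pw 3 z * z = pw 4 z" by (auto simp: pw_def power4_eq_xxxx power3_eq_cube)

context sol begin

definition Mf where "Mf t = integral {0..L} (m t)"

lemma mass: assumes "t \<in> {0..T}" shows "Mf t = 1"
proof -
  have d: "(Mf has_real_derivative integral {0..L} (mt t)) (at t within {0..T})" if "t \<in> {0..T}" for t
    unfolding Mf_def[abs_def]
    by (rule int_deriv[where \<Phi>t=mt, OF dmt cm cmt that])
  have c: "continuous_on {0..T} Mf" by (rule DERIV_continuous_on[OF d])
  have z: "integral {0..L} (mt t) = 0" if t: "t \<in> {0<..<T}" for t
  proof -
    have tt: "t \<in> {0..T}" using t by auto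
    have "(mt t has_integral (J t L - J t 0)) {0..L}"
      by (rule fundamental_theorem_of_calculus_interior) (use L slice_cont[OF cJ tt] dJ[OF t] in \<open>auto simp: has_real_derivative_iff_has_vector_derivative[symmetric]\<close>)
    then show ?thesis using J0[OF tt] JL[OF tt] by (simp add: integral_unique)
  qed
  have dd: "(Mf has_real_derivative 0) (at t)" if t: "t \<in> {0<..<T}" for t
    using d[of t] t int_att[OF t] z[OF t] by auto
  have "Mf t \<le> Mf 0" by (rule decr[OF c dd]) (use assms in auto)
  moreover have "- Mf t \<le> - Mf 0"
    by (rule decr[where F="\<lambda>t. - Mf t" and F'="\<lambda>t. 0"]) (use assms c dd in \<open>auto intro!: continuous_intros derivative_eq_intros\<close>)
  moreover have "Mf 0 = 1" unfolding Mf_def using m0int by (metis init integral_cong)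
  ultimately show ?thesis by simp
qed

definition F2 where "F2 t = integral {0..L} (\<lambda>x. pw 4 (u t x))"

lemma cu_slice: "t \<in> {0..T} \<Longrightarrow> continuous_on {0..L} (u t)"
  by (rule slice_cont[OF cu])

lemma F2_deriv: "t \<in> {0..T} \<Longrightarrow> (F2 has_real_derivative integral {0..L} (\<lambda>x. 4 * pw 3 (u t x) * ut t x)) (at t within {0..T})"
  unfolding F2_def[abs_def]
  apply (rule int_deriv[where \<Phi>t="\<lambda>t x. 4 * pw 3 (u t x) * ut t x"])
  subgoal for t x using DERIV_chain2[OF pw4_d dut[of t x]] by (simp add: mult.assoc)
  subgoal by (rule cp_comp[OF pw_cont cu]) auto
  subgoal by (intro cp_mult cp_const cut cp_comp[OF pw_cont cu]) auto
  by simp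

lemma F2_dnn: assumes t: "t \<in> {0<..<T}"
  shows "integral {0..L} (\<lambda>x. 4 * pw 3 (u t x) * ut t x) \<ge> 0"
proof -
  have tt: "t \<in> {0..T}" using t by auto
  have cux': "continuous_on {0..L} (ux t)" by (rule slice_cont[OF cux tt])
  have cuxx': "continuous_on {0..L} (uxx t)" by (rule slice_cont[OF cuxx tt])
  have cG': "continuous_on {0..L} (G t)" by (rule slice_cont[OF cG tt])
  have cp3: "continuous_on {0..L} (\<lambda>x. pw 3 (u t x))"
    by (intro continuous_on_compose2[OF pw_cont cu_slice[OF tt]]) auto
  have cp2: "continuous_on {0..L} (\<lambda>x. pw 2 (u t x))"
    by (intro continuous_on_compose2[OF pw_cont cu_slice[OF tt]]) auto
  define A where "A = integral {0..L} (\<lambda>x. ux t x * (12 * pw 2 (u t x) * ux t x))"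
  have iA: "((\<lambda>x. uxx t x * (4 * pw 3 (u t x))) has_integral
     (ux t L * (4 * pw 3 (u t L)) - ux t 0 * (4 * pw 3 (u t 0)) - A)) {0..L}"
    unfolding A_def
  proof (rule ibp)
    show "((\<lambda>x. 4 * pw 3 (u t x)) has_real_derivative 12 * pw 2 (u t x) * ux t x) (at x)" if "x \<in> {0<..<L}" for x
      using DERIV_chain2[OF pw3_d dux[of t x]] int_at[OF that] that tt by (simp add: mult.assoc)
    show "(ux t has_real_derivative uxx t x) (at x)" if "x \<in> {0<..<L}" for x
      using duxx[of t x] int_at[OF that] that tt by auto
  qed (use L cux' cp3 cp2 in \<open>auto intro!: continuous_intros\<close>)
  then have iA': "((\<lambda>x. uxx t x * (4 * pw 3 (u t x))) has_integral - A) {0..L}"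
    using neu[OF tt] by simp
  have A0: "A \<ge> 0" unfolding A_def
    by (rule integral_nonneg) (use cux' cp2 pw_nonneg in \<open>auto intro!: integrable_continuous_interval continuous_intros sqnn\<close>)
  define B where "B = integral {0..L} (\<lambda>x. 4 * pw 3 (u t x) * (r * u t x - (G t x)\<^sup>2))"
  have iB: "((\<lambda>x. 4 * pw 3 (u t x) * (r * u t x - (G t x)\<^sup>2)) has_integral B) {0..L}"
    unfolding B_def using cp3 cG' cu_slice[OF tt]
    by (intro integrable_integral integrable_continuous_interval continuous_intros)
  have pt: "4 * pw 3 (u t x) * (r * u t x - (G t x)\<^sup>2) \<ge> 0" for x
  proof -
    have "4 * pw 3 (u t x) * (r * u t x - (G t x)\<^sup>2) = 4 * r * (pw 3 (u t x) * u t x) + 4 * (- pw 3 (u t x)) * (G t x)\<^sup>2"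
      by (simp add: algebra_simps)
    also have "\<dots> \<ge> 0"
    proof -
      have "0 \<le> - pw 3 (u t x) * (G t x)\<^sup>2" using pw3_nonpos[of "u t x"] by (simp add: mult_nonpos_nonneg)
      moreover have "0 \<le> r * (pw 3 (u t x) * u t x)" using r pw_nonneg(1)[of "u t x"] by (simp add: pw3_mul)
      ultimately show ?thesis by simp
    qed
    finally show ?thesis .
  qed
  have B0: "B \<ge> 0" unfolding B_def
    by (rule integral_nonneg) (use iB pt in auto)
  have "((\<lambda>x. (- \<sigma>\<^sup>2 / 2) * (uxx t x * (4 * pw 3 (u t x))) + 4 * pw 3 (u t x) * (r * u t x - (G t x)\<^sup>2))
     has_integral ((- \<sigma>\<^sup>2 / 2) * (- A) + B)) {0..L}"
    by (intro has_integral_add has_integral_mult_right iA' iB)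
  then have "((\<lambda>x. 4 * pw 3 (u t x) * ut t x) has_integral ((- \<sigma>\<^sup>2 / 2) * (- A) + B)) {0..L}"
  proof (rule hi_int)
    fix x assume x: "x \<in> {0<..<L}"
    have eq: "ut t x = - \<sigma>\<^sup>2 / 2 * uxx t x + r * u t x - (G t x)\<^sup>2"
      using ueq[OF t x] by (simp add: G_def algebra_simps)
    show "4 * pw 3 (u t x) * ut t x = (- \<sigma>\<^sup>2 / 2) * (uxx t x * (4 * pw 3 (u t x))) + 4 * pw 3 (u t x) * (r * u t x - (G t x)\<^sup>2)"
      unfolding eq by (simp add: algebra_simps)
  qed
  then show ?thesis using A0 B0 by (simp add: integral_unique)
qed

lemma u_nonneg: assumes "t \<in> {0..T}" "x \<in> {0..L}" shows "u t x \<ge> 0"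
proof -
  have c: "continuous_on {0..T} F2" by (rule DERIV_continuous_on[OF F2_deriv])
  have "- F2 T \<le> - F2 t"
  proof (rule decr[where F="\<lambda>t. - F2 t" and F'="\<lambda>t. - integral {0..L} (\<lambda>x. 4 * pw 3 (u t x) * ut t x)"])
    show "continuous_on {0..T} (\<lambda>t. - F2 t)" using c by (intro continuous_intros)
    fix s assume s: "s \<in> {0<..<T}"
    show "((\<lambda>t. - F2 t) has_real_derivative - integral {0..L} (\<lambda>x. 4 * pw 3 (u s x) * ut s x)) (at s)"
      using F2_deriv[of s] s int_att[OF s] by (auto intro!: derivative_eq_intros)
    show "- integral {0..L} (\<lambda>x. 4 * pw 3 (u s x) * ut s x) \<le> 0" using F2_dnn[OF s] by simp
  qed (use assms in auto)
  moreover have "F2 T = 0"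
    unfolding F2_def using integral_cong[of "{0..L}" "\<lambda>x. pw 4 (u T x)" "\<lambda>x. 0"] termc uTpos pw_pos_zero by simp
  moreover have tt: "t \<in> {0..T}" using assms by auto
  moreover have cp: "continuous_on {0..L} (\<lambda>x. pw 4 (u t x))"
    by (intro continuous_on_compose2[OF pw_cont cu_slice[OF tt]]) auto
  moreover have "F2 t \<ge> 0" unfolding F2_def
    by (rule integral_nonneg) (use cp in \<open>auto intro!: integrable_continuous_interval simp: pw_nonneg\<close>)
  ultimately have "F2 t = 0" by simp
  then have "((\<lambda>x. pw 4 (u t x)) has_integral 0) (cbox 0 L)"
    using integrable_continuous_interval[OF cp] unfolding F2_def by (simp add: has_integral_integral)
  then have "pw 4 (u t x) = 0"
    by (rule has_integral_0_cbox_imp_0[rotated 2]) (use assms L cp in \<open>auto simp: pw_nonneg\<close>)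
  then show ?thesis by (rule pw4_zero)
qed

end


context sol begin

definition D where "D t = integral {0..L} (\<lambda>x. u t x * m t x)"
definition Dp where "Dp t = integral {0..L} (\<lambda>x. ut t x * m t x + u t x * mt t x)"
definition R where "R t = integral {0..L} (\<lambda>x. (G t x)\<^sup>2 * m t x)"
definition S where "S t = integral {0..L} (\<lambda>x. G t x * m t x)"

lemma D_deriv: "t \<in> {0..T} \<Longrightarrow> (D has_real_derivative Dp t) (at t within {0..T})"
  unfolding D_def[abs_def] Dp_def
  apply (rule int_deriv[where \<Phi>t="\<lambda>t x. ut t x * m t x + u t x * mt t x"])
  subgoal for t x using DERIV_mult[OF dut[of t x] dmt[of t x]] by (simp add: mult.commute)
  subgoal by (intro cp_mult cu cm)
  subgoal by (intro cp_add cp_mult cut cm cu cmt)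
  by simp

lemma bc: "bcoef \<epsilon> + ccoef \<epsilon> = 1" "bcoef \<epsilon> > 0" "ccoef \<epsilon> \<ge> 0"
proof -
  have "2 + \<epsilon> > 0" using eps by simp
  then show "bcoef \<epsilon> + ccoef \<epsilon> = 1" "bcoef \<epsilon> > 0" "ccoef \<epsilon> \<ge> 0"
    using eps by (auto simp: bcoef_def ccoef_def add_divide_distrib[symmetric])
qed

lemma Dp_bound: assumes t: "t \<in> {0<..<T}" shows "R t \<le> 2 * Dp t + 1"
proof -
  have tt: "t \<in> {0..T}" using t by auto
  have cu': "continuous_on {0..L} (u t)" by (rule slice_cont[OF cu tt])
  have cm': "continuous_on {0..L} (m t)" by (rule slice_cont[OF cm tt])
  have cux': "continuous_on {0..L} (ux t)" by (rule slice_cont[OF cux tt])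
  have cuxx': "continuous_on {0..L} (uxx t)" by (rule slice_cont[OF cuxx tt])
  have cmx': "continuous_on {0..L} (mx t)" by (rule slice_cont[OF cmx tt])
  have cG': "continuous_on {0..L} (G t)" by (rule slice_cont[OF cG tt])
  have cJ': "continuous_on {0..L} (J t)" by (rule slice_cont[OF cJ tt])
  define P where "P = integral {0..L} (\<lambda>x. J t x * ux t x)"
  define Q where "Q = integral {0..L} (\<lambda>x. m t x * uxx t x)"
  define W where "W = integral {0..L} (\<lambda>x. G t x * m t x * ux t x)"
  have iP: "((\<lambda>x. mt t x * u t x) has_integral (J t L * u t L - J t 0 * u t 0 - P)) {0..L}"
    unfolding P_def
  proof (rule ibp)
    show "(J t has_real_derivative mt t x) (at x)" if "x \<in> {0<..<L}" for x using dJ[OF t that] .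
    show "(u t has_real_derivative ux t x) (at x)" if "x \<in> {0<..<L}" for x
      using dux[of t x] int_at[OF that] that tt by auto
  qed (use L cJ' cu' cux' in \<open>auto intro!: continuous_intros\<close>)
  then have iP': "((\<lambda>x. u t x * mt t x) has_integral - P) {0..L}"
    using J0[OF tt] JL[OF tt] by (simp add: mult.commute)
  have iQ: "((\<lambda>x. mx t x * ux t x) has_integral (m t L * ux t L - m t 0 * ux t 0 - Q)) {0..L}"
    unfolding Q_def
  proof (rule ibp)
    show "(m t has_real_derivative mx t x) (at x)" if "x \<in> {0<..<L}" for x
      using dmx[of t x] int_at[OF that] that tt by auto
    show "(ux t has_real_derivative uxx t x) (at x)" if "x \<in> {0<..<L}" for x
      using duxx[of t x] int_at[OF that] that tt by auto
  qed (use L cm' cux' cuxx' in \<open>auto intro!: continuous_intros\<close>)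
  then have iQ': "((\<lambda>x. mx t x * ux t x) has_integral - Q) {0..L}"
    using neu[OF tt] by simp
  have iW: "((\<lambda>x. G t x * m t x * ux t x) has_integral W) {0..L}"
    unfolding W_def using cG' cm' cux' by (intro integrable_integral integrable_continuous_interval continuous_intros)
  have "((\<lambda>x. \<sigma>\<^sup>2 / 2 * (mx t x * ux t x) + G t x * m t x * ux t x) has_integral (\<sigma>\<^sup>2 / 2 * (- Q) + W)) {0..L}"
    by (intro has_integral_add has_integral_mult_right iQ' iW)
  then have "((\<lambda>x. J t x * ux t x) has_integral (\<sigma>\<^sup>2 / 2 * (- Q) + W)) {0..L}"
    by (simp add: J_def algebra_simps)
  then have Peq: "P = \<sigma>\<^sup>2 / 2 * (- Q) + W" unfolding P_def by (rule integral_unique)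
  have iQ2: "((\<lambda>x. m t x * uxx t x) has_integral Q) {0..L}"
    unfolding Q_def using cm' cuxx' by (intro integrable_integral integrable_continuous_interval continuous_intros)
  have iD: "((\<lambda>x. u t x * m t x) has_integral D t) {0..L}"
    unfolding D_def using cm' cu' by (intro integrable_integral integrable_continuous_interval continuous_intros)
  have iR: "((\<lambda>x. (G t x)\<^sup>2 * m t x) has_integral R t) {0..L}"
    unfolding R_def using cm' cG' by (intro integrable_integral integrable_continuous_interval continuous_intros)
  have iS: "((\<lambda>x. G t x * m t x) has_integral S t) {0..L}"
    unfolding S_def using cm' cG' by (intro integrable_integral integrable_continuous_interval continuous_intros)
  have iM: "(m t has_integral 1) {0..L}"
    using mass[OF tt] unfolding Mf_def using cm' by (metis has_integral_integral integrable_continuous_interval)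
  have "((\<lambda>x. (- \<sigma>\<^sup>2 / 2) * (m t x * uxx t x) + r * (u t x * m t x) - (G t x)\<^sup>2 * m t x + u t x * mt t x)
     has_integral ((- \<sigma>\<^sup>2 / 2) * Q + r * D t - R t + - P)) {0..L}"
    by (intro has_integral_add has_integral_diff has_integral_mult_right iQ2 iD iR iP')
  then have "((\<lambda>x. ut t x * m t x + u t x * mt t x) has_integral ((- \<sigma>\<^sup>2 / 2) * Q + r * D t - R t + - P)) {0..L}"
  proof (rule hi_int)
    fix x assume x: "x \<in> {0<..<L}"
    have eq: "ut t x = - \<sigma>\<^sup>2 / 2 * uxx t x + r * u t x - (G t x)\<^sup>2"
      using ueq[OF t x] by (simp add: G_def algebra_simps)
    show "ut t x * m t x + u t x * mt t x = (- \<sigma>\<^sup>2 / 2) * (m t x * uxx t x) + r * (u t x * m t x) - (G t x)\<^sup>2 * m t x + u t x * mt t x"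
      unfolding eq by (simp add: algebra_simps)
  qed
  then have Dpe: "Dp t = r * D t - R t - W"
    unfolding Dp_def using Peq by (simp add: integral_unique algebra_simps)
  have "((\<lambda>x. \<beta> t * (G t x * m t x) - 2 * ((G t x)\<^sup>2 * m t x)) has_integral (\<beta> t * S t - 2 * R t)) {0..L}"
    by (intro has_integral_diff has_integral_mult_right iS iR)
  then have "((\<lambda>x. G t x * m t x * ux t x) has_integral (\<beta> t * S t - 2 * R t)) {0..L}"
  proof (rule hi_int)
    fix x have e: "ux t x = \<beta> t - 2 * G t x" using G_alt[of t x] by simp
    show "G t x * m t x * ux t x = \<beta> t * (G t x * m t x) - 2 * ((G t x)\<^sup>2 * m t x)"
      unfolding e by (simp add: power2_eq_square algebra_simps)
  qed
  then have We: "W = \<beta> t * S t - 2 * R t" using iW by (rule has_integral_unique[rotated])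
  have "((\<lambda>x. \<beta> t * m t x - 2 * (G t x * m t x)) has_integral (\<beta> t * 1 - 2 * S t)) {0..L}"
    by (intro has_integral_diff has_integral_mult_right iS iM)
  then have "((\<lambda>x. \<beta> t * m t x - 2 * (G t x * m t x)) has_integral (\<beta> t - 2 * S t)) {0..L}" by simp
  then have "((\<lambda>x. ux t x * m t x) has_integral (\<beta> t - 2 * S t)) {0..L}"
  proof (rule hi_int)
    fix x have e: "ux t x = \<beta> t - 2 * G t x" using G_alt[of t x] by simp
    show "ux t x * m t x = \<beta> t * m t x - 2 * (G t x * m t x)"
      unfolding e by (simp add: algebra_simps)
  qed
  then have Iue: "Iu t = \<beta> t - 2 * S t" unfolding Iu_def by (rule integral_unique)
  have h1: "\<beta> t = bcoef \<epsilon> + ccoef \<epsilon> * (\<beta> t - 2 * S t)"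
    using Iue by (simp add: \<beta>_def)
  have h2: "\<beta> t * (1 - ccoef \<epsilon>) = bcoef \<epsilon> - 2 * ccoef \<epsilon> * S t"
    using h1 by (simp add: algebra_simps)
  have "\<beta> t * bcoef \<epsilon> = bcoef \<epsilon> - 2 * ccoef \<epsilon> * S t"
    using h2 bc(1) by (metis add_diff_cancel_right')
  then have bS: "\<beta> t * S t \<le> S t"
  proof -
    assume h: "\<beta> t * bcoef \<epsilon> = bcoef \<epsilon> - 2 * ccoef \<epsilon> * S t"
    have "\<beta> t * S t * bcoef \<epsilon> = S t * bcoef \<epsilon> - 2 * ccoef \<epsilon> * (S t)\<^sup>2"
      using arg_cong[OF h, of "\<lambda>z. z * S t"] by (simp add: power2_eq_square algebra_simps)
    also have "\<dots> \<le> S t * bcoef \<epsilon>" using bc(3) by simp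
    finally show ?thesis using bc(2) by (simp add: mult_le_cancel_right)
  qed
  have "S t \<le> integral {0..L} (\<lambda>x. ((G t x)\<^sup>2 * m t x + m t x) / 2)"
    unfolding S_def
  proof (rule integral_le)
    show "(\<lambda>x. G t x * m t x) integrable_on {0..L}" using iS by blast
    show "(\<lambda>x. ((G t x)\<^sup>2 * m t x + m t x) / 2) integrable_on {0..L}"
      using cm' cG' by (intro integrable_continuous_interval continuous_intros) auto
    fix x assume x: "x \<in> {0..L}"
    have "0 \<le> (G t x - 1)\<^sup>2 * m t x / 2" using m_nonneg[OF tt x] by simp
    then show "G t x * m t x \<le> ((G t x)\<^sup>2 * m t x + m t x) / 2"
      by (simp add: power2_eq_square algebra_simps)
  qed
  also have "\<dots> = (R t + 1) / 2"
  proof -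
    have "((\<lambda>x. ((G t x)\<^sup>2 * m t x + m t x) / 2) has_integral (R t + 1) / 2) {0..L}"
      using has_integral_divide[OF has_integral_add[OF iR iM], of 2] by simp
    then show ?thesis by (rule integral_unique)
  qed
  finally have Sle: "S t \<le> (R t + 1) / 2" .
  have D0: "D t \<ge> 0" unfolding D_def
  proof (rule integral_nonneg)
    show "(\<lambda>x. u t x * m t x) integrable_on {0..L}" using iD by blast
    fix x assume "x \<in> {0..L}"
    then show "0 \<le> u t x * m t x" using u_nonneg[OF tt] m_nonneg[OF tt] by simp
  qed
  have e1: "Dp t = r * D t + R t - \<beta> t * S t" using Dpe We by simp
  have e2: "r * D t \<ge> 0" using D0 r by simp
  have "R t - S t \<le> Dp t" using e1 e2 bS by linarith
  moreover have "2 * S t \<le> R t + 1" using Sle by simp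
  ultimately have "R t \<le> 2 * Dp t + 1" by linarith
  then show ?thesis by simp
qed

lemma cR: "continuous_on {0..T} R"
  unfolding R_def[abs_def] by (rule int_cont) (intro cp_mult cG cm cp_comp[where h="\<lambda>z. z\<^sup>2", OF _ cG], auto intro!: continuous_intros)

lemma cDp: "continuous_on {0..T} Dp"
  unfolding Dp_def[abs_def] by (rule int_cont) (intro cp_add cp_mult cut cm cu cmt)

lemma R_int_bound: assumes U: "\<And>x. x \<in> {0..L} \<Longrightarrow> uT x \<le> U"
  shows "integral {0..T} R \<le> 2 * U + T"
proof -
  have ftc: "(Dp has_integral (D T - D 0)) {0..T}"
    by (rule fundamental_theorem_of_calculus) (use T D_deriv in \<open>auto simp: has_real_derivative_iff_has_vector_derivative[symmetric]\<close>)
  have "integral {0..T} R \<le> integral {0..T} (\<lambda>t. 2 * Dp t + 1)"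
  proof (rule integral_le)
    show "R integrable_on {0..T}" by (rule integrable_continuous_interval[OF cR])
    show "(\<lambda>t. 2 * Dp t + 1) integrable_on {0..T}" using cDp by (intro integrable_continuous_interval continuous_intros)
    fix t assume t: "t \<in> {0..T}"
    have "(\<lambda>t. R t - (2 * Dp t + 1)) t \<le> 0"
      by (rule le_closed[OF _ T _ t]) (use cR cDp Dp_bound in \<open>auto intro!: continuous_intros\<close>)
    then show "R t \<le> 2 * Dp t + 1" by simp
  qed
  also have "\<dots> = 2 * (D T - D 0) + T"
  proof -
    have c1: "((\<lambda>t. 1::real) has_integral T) {0..T}" using has_integral_const_real[of "1::real" 0 T] T by simp
    have "((\<lambda>t. 2 * Dp t + 1) has_integral (2 * (D T - D 0) + T)) {0..T}"
      by (intro has_integral_add has_integral_mult_right ftc c1)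
    then show ?thesis using T by (simp add: integral_unique)
  qed
  also have "\<dots> \<le> 2 * U + T"
  proof -
    have c0: "continuous_on {0..L} (\<lambda>x. u 0 x * m 0 x)"
      using slice_cont[OF cu, of 0] slice_cont[OF cm, of 0] T by (auto intro!: continuous_intros)
    have "D 0 \<ge> 0" unfolding D_def
      by (rule integral_nonneg) (use c0 m_nonneg u_nonneg T in \<open>auto intro!: integrable_continuous_interval\<close>)
    have cT: "continuous_on {0..L} (m T)" using slice_cont[OF cm, of T] T by auto
    have cT2: "continuous_on {0..L} (\<lambda>x. u T x * m T x)"
      using slice_cont[OF cu, of T] cT T by (auto intro!: continuous_intros)
    have "D T \<le> integral {0..L} (\<lambda>x. U * m T x)"
      unfolding D_def
    proof (rule integral_le)
      show "(\<lambda>x. u T x * m T x) integrable_on {0..L}" using cT2 by (rule integrable_continuous_interval)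
      show "(\<lambda>x. U * m T x) integrable_on {0..L}" using cT by (intro integrable_continuous_interval continuous_intros)
      fix x assume x: "x \<in> {0..L}"
      show "u T x * m T x \<le> U * m T x"
        using termc[OF x] U[OF x] m_nonneg[of T x] T x by (simp add: mult_right_mono)
    qed
    also have "\<dots> = U * Mf T" unfolding Mf_def by simp
    also have "\<dots> = U" using mass[of T] T by simp
    finally show ?thesis using \<open>D 0 \<ge> 0\<close> by simp
  qed
  finally show ?thesis .
qed

end


definition phi :: "real \<Rightarrow> real" where "phi z = (z + 1) * ln (z + 1) - z"

lemma phi_d: "z > -1 \<Longrightarrow> (phi has_real_derivative ln (z + 1)) (at z)"
  unfolding phi_def[abs_def] by (auto intro!: derivative_eq_intros)

lemma phi_cont: "continuous_on {0..} phi"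
  unfolding phi_def[abs_def] by (intro continuous_intros) auto

lemma lnp_cont: "continuous_on {0..} (\<lambda>z::real. ln (z + 1))"
  by (intro continuous_intros) auto

lemma phi_nonneg: assumes "z \<ge> 0" shows "phi z \<ge> 0"
proof -
  have "phi 0 \<le> phi z"
    by (rule DERIV_nonneg_imp_increasing_open[OF assms]) (auto intro!: exI phi_d continuous_on_subset[OF phi_cont])
  then show ?thesis by (simp add: phi_def)
qed

lemma ineq2: fixes s a g :: real assumes "s > 0"
  shows "- (s\<^sup>2 / 2 * a\<^sup>2 + g * a) \<le> - (s\<^sup>2 / 4 * a\<^sup>2) + g\<^sup>2 / s\<^sup>2"
proof -
  have "0 \<le> (s * a / 2 + g / s)\<^sup>2" by simp
  also have "(s * a / 2 + g / s)\<^sup>2 = s\<^sup>2 / 4 * a\<^sup>2 + g * a + g\<^sup>2 / s\<^sup>2"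
    using assms by (simp add: power2_eq_square field_simps)
  finally show ?thesis by linarith
qed

lemma alg: fixes p s a G m :: real assumes "p > 0" "s > 0"
  shows "(-(s\<^sup>2/4*a\<^sup>2) + (G*m)\<^sup>2/s\<^sup>2)/p = -(s\<^sup>2/4)*(a\<^sup>2/p) + G\<^sup>2*(m*(m/p))/s\<^sup>2"
  using assms by (simp add: diff_divide_distrib add_divide_distrib power_mult_distrib power2_eq_square algebra_simps)

context sol begin

definition E where "E t = integral {0..L} (\<lambda>x. phi (m t x))"
definition Ep where "Ep t = integral {0..L} (\<lambda>x. ln (m t x + 1) * mt t x)"
definition Q where "Q t = integral {0..L} (\<lambda>x. (mx t x)\<^sup>2 / (m t x + 1))"

lemma mpos': "(t, x) \<in> {0..T} \<times> {0..L} \<Longrightarrow> m t x \<in> {0..}"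
  using m_nonneg by auto

lemma mne: "t \<in> {0..T} \<Longrightarrow> x \<in> {0..L} \<Longrightarrow> m t x + 1 \<noteq> 0"
  using m_nonneg[of t x] by auto

lemma E_deriv: "t \<in> {0..T} \<Longrightarrow> (E has_real_derivative Ep t) (at t within {0..T})"
  unfolding E_def[abs_def] Ep_def
  apply (rule int_deriv[where \<Phi>t="\<lambda>t x. ln (m t x + 1) * mt t x"])
  subgoal for t x using DERIV_chain2[OF phi_d dmt[of t x]] m_nonneg[of t x] by simp
  subgoal by (rule cp_comp[OF phi_cont cm mpos'])
  subgoal by (intro cp_mult cmt cp_comp[OF lnp_cont cm mpos'])
  by simp

lemma cEp: "continuous_on {0..T} Ep"
  unfolding Ep_def[abs_def] by (rule int_cont) (intro cp_mult cmt cp_comp[OF lnp_cont cm mpos'])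

lemma cQq: "continuous_on ({0..T} \<times> {0..L}) (\<lambda>(t,x). (mx t x)\<^sup>2 / (m t x + 1))"
proof -
  have "continuous_on ({0..T} \<times> {0..L}) (\<lambda>p. ((\<lambda>(t,x). mx t x) p)\<^sup>2 / ((\<lambda>(t,x). m t x) p + 1))"
    by (intro continuous_intros cmx cm) (auto simp: mne)
  then show ?thesis by (simp add: case_prod_beta)
qed

lemma cQ: "continuous_on {0..T} Q"
  unfolding Q_def[abs_def] by (rule int_cont) (rule cQq)

lemma Ep_bound: assumes t: "t \<in> {0<..<T}" shows "Ep t \<le> - (\<sigma>\<^sup>2 / 4) * Q t + R t / \<sigma>\<^sup>2"
proof -
  have tt: "t \<in> {0..T}" using t by auto
  have cm': "continuous_on {0..L} (m t)" by (rule slice_cont[OF cm tt])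
  have cmx': "continuous_on {0..L} (mx t)" by (rule slice_cont[OF cmx tt])
  have cG': "continuous_on {0..L} (G t)" by (rule slice_cont[OF cG tt])
  have cJ': "continuous_on {0..L} (J t)" by (rule slice_cont[OF cJ tt])
  have mnn: "x \<in> {0..L} \<Longrightarrow> m t x \<ge> 0" for x using m_nonneg[OF tt] by auto
  have cl: "continuous_on {0..L} (\<lambda>x. ln (m t x + 1))"
    by (rule continuous_on_compose2[OF lnp_cont cm']) (use mnn in auto)
  have cfr: "continuous_on {0..L} (\<lambda>x. mx t x / (m t x + 1))"
    by (intro continuous_intros cmx' cm') (use tt in \<open>auto simp: mne\<close>)
  have "((\<lambda>x. mt t x * ln (m t x + 1)) has_integral
     (J t L * ln (m t L + 1) - J t 0 * ln (m t 0 + 1) - integral {0..L} (\<lambda>x. J t x * (mx t x / (m t x + 1))))) {0..L}"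
  proof (rule ibp)
    show "(J t has_real_derivative mt t x) (at x)" if "x \<in> {0<..<L}" for x using dJ[OF t that] .
    show "((\<lambda>x. ln (m t x + 1)) has_real_derivative mx t x / (m t x + 1)) (at x)" if x: "x \<in> {0<..<L}" for x
    proof -
      have "(m t has_real_derivative mx t x) (at x)" using dmx[of t x] int_at[OF x] x tt by auto
      moreover have "m t x + 1 > 0" using mnn[of x] x by auto
      ultimately show ?thesis by (auto intro!: derivative_eq_intros simp: field_simps)
    qed
  qed (use L cJ' cl cfr cmx' cm' tt in \<open>auto intro!: continuous_intros simp: mne\<close>)
  then have "Ep t = - integral {0..L} (\<lambda>x. J t x * (mx t x / (m t x + 1)))"
    unfolding Ep_def using J0[OF tt] JL[OF tt] by (simp add: mult.commute integral_unique)
  also have "\<dots> = integral {0..L} (\<lambda>x. - (J t x * (mx t x / (m t x + 1))))" by simp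
  also have "\<dots> \<le> integral {0..L} (\<lambda>x. - (\<sigma>\<^sup>2 / 4) * ((mx t x)\<^sup>2 / (m t x + 1)) + (G t x)\<^sup>2 * m t x / \<sigma>\<^sup>2)"
  proof (rule integral_le)
    show "(\<lambda>x. - (J t x * (mx t x / (m t x + 1)))) integrable_on {0..L}"
      using cJ' cfr cmx' cm' tt by (intro integrable_continuous_interval continuous_intros) (auto simp: mne)
    show "(\<lambda>x. - (\<sigma>\<^sup>2 / 4) * ((mx t x)\<^sup>2 / (m t x + 1)) + (G t x)\<^sup>2 * m t x / \<sigma>\<^sup>2) integrable_on {0..L}"
      using cfr cmx' cm' cG' by (intro integrable_continuous_interval continuous_intros) (use tt sig in \<open>auto simp: mne\<close>)
    fix x assume x: "x \<in> {0..L}"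
    have m0: "m t x \<ge> 0" using mnn[OF x] .
    define a where "a = mx t x"
    define g where "g = G t x * m t x"
    have pos: "m t x + 1 > 0" using m0 by simp
    have "- (J t x * (mx t x / (m t x + 1))) = (- (\<sigma>\<^sup>2 / 2 * a\<^sup>2 + g * a)) / (m t x + 1)"
      using pos by (simp add: J_def a_def g_def power2_eq_square field_simps)
    also have "\<dots> \<le> (- (\<sigma>\<^sup>2 / 4 * a\<^sup>2) + g\<^sup>2 / \<sigma>\<^sup>2) / (m t x + 1)"
      by (rule divide_right_mono[OF ineq2[OF sig]]) (use pos in auto)
    also have "\<dots> = - (\<sigma>\<^sup>2 / 4) * ((mx t x)\<^sup>2 / (m t x + 1)) + (G t x)\<^sup>2 * (m t x * (m t x / (m t x + 1))) / \<sigma>\<^sup>2"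
      unfolding a_def g_def by (rule alg[OF pos sig])
    also have "\<dots> \<le> - (\<sigma>\<^sup>2 / 4) * ((mx t x)\<^sup>2 / (m t x + 1)) + (G t x)\<^sup>2 * m t x / \<sigma>\<^sup>2"
    proof -
      have "m t x / (m t x + 1) \<le> 1" using pos by simp
      then have "m t x * (m t x / (m t x + 1)) \<le> m t x * 1" using m0 by (intro mult_left_mono) auto
      then have "m t x * (m t x / (m t x + 1)) \<le> m t x" by simp
      then have "(G t x)\<^sup>2 * (m t x * (m t x / (m t x + 1))) \<le> (G t x)\<^sup>2 * m t x"
        by (rule mult_left_mono) simp
      then have "(G t x)\<^sup>2 * (m t x * (m t x / (m t x + 1))) / \<sigma>\<^sup>2 \<le> (G t x)\<^sup>2 * m t x / \<sigma>\<^sup>2"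
        by (rule divide_right_mono) simp
      then show ?thesis by (rule add_left_mono)
    qed
    finally show "- (J t x * (mx t x / (m t x + 1))) \<le> - (\<sigma>\<^sup>2 / 4) * ((mx t x)\<^sup>2 / (m t x + 1)) + (G t x)\<^sup>2 * m t x / \<sigma>\<^sup>2" .
  qed
  also have "\<dots> = - (\<sigma>\<^sup>2 / 4) * Q t + R t / \<sigma>\<^sup>2"
  proof -
    have iQ: "((\<lambda>x. (mx t x)\<^sup>2 / (m t x + 1)) has_integral Q t) {0..L}"
      unfolding Q_def using slice_cont[OF cQq tt]
      by (intro integrable_integral integrable_continuous_interval) (simp add: case_prod_beta)
    have iR: "((\<lambda>x. (G t x)\<^sup>2 * m t x) has_integral R t) {0..L}"
      unfolding R_def using cm' cG' by (intro integrable_integral integrable_continuous_interval continuous_intros)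
    have "((\<lambda>x. - (\<sigma>\<^sup>2 / 4) * ((mx t x)\<^sup>2 / (m t x + 1)) + (G t x)\<^sup>2 * m t x / \<sigma>\<^sup>2) has_integral
        (- (\<sigma>\<^sup>2 / 4) * Q t + R t / \<sigma>\<^sup>2)) {0..L}"
      by (intro has_integral_add has_integral_mult_right has_integral_divide iQ iR)
    then show ?thesis by (rule integral_unique)
  qed
  finally show ?thesis .
qed

lemma Q_bound: assumes U: "\<And>x. x \<in> {0..L} \<Longrightarrow> uT x \<le> U"
  shows "\<sigma>\<^sup>2 / 4 * integral {0..T} Q \<le> integral {0..L} (\<lambda>x. phi (m0 x)) + (2 * U + T) / \<sigma>\<^sup>2"
proof -
  have ftc: "(Ep has_integral (E T - E 0)) {0..T}"
    by (rule fundamental_theorem_of_calculus) (use T E_deriv in \<open>auto simp: has_real_derivative_iff_has_vector_derivative[symmetric]\<close>)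
  have iQ: "(Q has_integral integral {0..T} Q) {0..T}" by (intro integrable_integral integrable_continuous_interval cQ)
  have iR: "(R has_integral integral {0..T} R) {0..T}" by (intro integrable_integral integrable_continuous_interval cR)
  have "E T - E 0 \<le> - (\<sigma>\<^sup>2 / 4) * integral {0..T} Q + integral {0..T} R / \<sigma>\<^sup>2"
  proof (rule has_integral_le[OF ftc])
    show "((\<lambda>t. - (\<sigma>\<^sup>2 / 4) * Q t + R t / \<sigma>\<^sup>2) has_integral (- (\<sigma>\<^sup>2 / 4) * integral {0..T} Q + integral {0..T} R / \<sigma>\<^sup>2)) {0..T}"
      by (intro has_integral_add has_integral_mult_right has_integral_divide iQ iR)
    fix t assume t: "t \<in> {0..T}"
    have "(\<lambda>t. Ep t - (- (\<sigma>\<^sup>2 / 4) * Q t + R t / \<sigma>\<^sup>2)) t \<le> 0"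
      by (rule le_closed[OF _ T _ t]) (use cEp cQ cR Ep_bound sig in \<open>auto intro!: continuous_intros\<close>)
    then show "Ep t \<le> - (\<sigma>\<^sup>2 / 4) * Q t + R t / \<sigma>\<^sup>2" by simp
  qed
  moreover have "E T \<ge> 0" unfolding E_def
  proof (rule integral_nonneg)
    show "(\<lambda>x. phi (m T x)) integrable_on {0..L}"
      by (rule integrable_continuous_interval, rule continuous_on_compose2[OF phi_cont slice_cont[OF cm, of T]])
         (use T m_nonneg in auto)
    fix x assume "x \<in> {0..L}" then show "0 \<le> phi (m T x)" using phi_nonneg m_nonneg[of T x] T by auto
  qed
  moreover have "E 0 = integral {0..L} (\<lambda>x. phi (m0 x))" unfolding E_def by (rule integral_cong) (simp add: init)
  moreover have "integral {0..T} R / \<sigma>\<^sup>2 \<le> (2 * U + T) / \<sigma>\<^sup>2"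
    by (rule divide_right_mono[OF R_int_bound[OF U]]) auto
  ultimately show ?thesis by linarith
qed

end


lemma sig_sqrt: fixes s X :: real assumes "X \<ge> 0" "s\<^sup>2 * s\<^sup>2 * X \<le> C0"
  shows "s\<^sup>2 * sqrt X \<le> sqrt C0"
proof -
  have e1: "sqrt (s\<^sup>2 * s\<^sup>2 * X) = sqrt ((s\<^sup>2)\<^sup>2) * sqrt X"
    by (simp only: real_sqrt_mult power2_eq_square[of "s\<^sup>2"])
  have e2: "sqrt ((s\<^sup>2)\<^sup>2) = s\<^sup>2" by (simp only: real_sqrt_abs abs_of_nonneg zero_le_power2)
  have "s\<^sup>2 * sqrt X = sqrt (s\<^sup>2 * s\<^sup>2 * X)" unfolding e1 e2 ..
  also have "\<dots> \<le> sqrt C0" using assms(2) by simp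
  finally show ?thesis .
qed

theorem lemma4p5:
  fixes L T r \<epsilon> \<gamma> :: real and uT m0 :: "real \<Rightarrow> real"
  assumes "L > 0" and "T > 0" and "r > 0" and "\<epsilon> > 0" and "\<gamma> > 0"
    and "C2gamma L \<gamma> uT" and "C2gamma L \<gamma> m0"
    and "(uT has_real_derivative 0) (at 0 within {0..L})"
    and "(uT has_real_derivative 0) (at L within {0..L})"
    and "m0 0 = 0" and "m0 L = 0"
    and "(m0 has_real_derivative 0) (at 0 within {0..L})"
    and "(m0 has_real_derivative 0) (at L within {0..L})"
    and "\<forall>x\<in>{0..L}. m0 x \<ge> 0" and "integral {0..L} m0 = 1"
    and "\<forall>x\<in>{0..L}. uT x \<ge> 0"
  shows "\<exists>C. \<forall>\<sigma> u m mx. 0 < \<sigma> \<and> \<sigma> \<le> 1 \<and> classical_solution L T r \<epsilon> \<sigma> uT m0 u m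
            \<and> (\<forall>t\<in>{0..T}. \<forall>x\<in>{0..L}.
                  ((\<lambda>y. m t y) has_real_derivative mx t x) (at x within {0..L}))
          \<longrightarrow> \<sigma>\<^sup>2 * sqrt (integral {0..T} (\<lambda>t. integral {0..L}
                  (\<lambda>x. \<bar>mx t x\<bar>\<^sup>2 / (m t x + 1)))) \<le> C"
proof -
  obtain f1 f2 H where "\<forall>x\<in>{0..L}. (uT has_real_derivative f1 x) (at x within {0..L})"
    using assms(6) unfolding C2gamma_def by blast
  then have cuT: "continuous_on {0..L} uT" by (intro DERIV_continuous_on) blast
  have "compact (uT ` {0..L})" by (intro compact_continuous_image cuT compact_Icc)
  then obtain B where B: "\<forall>y\<in>uT ` {0..L}. norm y \<le> B"
    using compact_imp_bounded bounded_iff by metis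
  have UB: "\<And>x. x \<in> {0..L} \<Longrightarrow> uT x \<le> \<bar>B\<bar>"
  proof -
    fix x assume "x \<in> {0..L}"
    then have "norm (uT x) \<le> B" using B by blast
    then show "uT x \<le> \<bar>B\<bar>" by simp
  qed
  define E0 where "E0 = integral {0..L} (\<lambda>x. phi (m0 x))"
  define C0 where "C0 = 4 * \<bar>E0\<bar> + 8 * \<bar>B\<bar> + 4 * T"
  show ?thesis
  proof (intro exI[of _ "sqrt C0"] allI impI)
    fix \<sigma> u m mx
    assume h: "0 < \<sigma> \<and> \<sigma> \<le> 1 \<and> classical_solution L T r \<epsilon> \<sigma> uT m0 u m
            \<and> (\<forall>t\<in>{0..T}. \<forall>x\<in>{0..L}. ((\<lambda>y. m t y) has_real_derivative mx t x) (at x within {0..L}))"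
    then obtain ut ux uxx mt mx' mxx where cs:
      "(\<forall>t\<in>{0..T}. \<forall>x\<in>{0..L}.
          ((\<lambda>s. u s x) has_real_derivative ut t x) (at t within {0..T})
        \<and> ((\<lambda>y. u t y) has_real_derivative ux t x) (at x within {0..L})
        \<and> ((\<lambda>y. ux t y) has_real_derivative uxx t x) (at x within {0..L})
        \<and> ((\<lambda>s. m s x) has_real_derivative mt t x) (at t within {0..T})
        \<and> ((\<lambda>y. m t y) has_real_derivative mx' t x) (at x within {0..L})
        \<and> ((\<lambda>y. mx' t y) has_real_derivative mxx t x) (at x within {0..L}))
    \<and> continuous_on ({0..T} \<times> {0..L}) (\<lambda>(t,x). u t x)
    \<and> continuous_on ({0..T} \<times> {0..L}) (\<lambda>(t,x). ut t x)
    \<and> continuous_on ({0..T} \<times> {0..L}) (\<lambda>(t,x). ux t x)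
    \<and> continuous_on ({0..T} \<times> {0..L}) (\<lambda>(t,x). uxx t x)
    \<and> continuous_on ({0..T} \<times> {0..L}) (\<lambda>(t,x). m t x)
    \<and> continuous_on ({0..T} \<times> {0..L}) (\<lambda>(t,x). mt t x)
    \<and> continuous_on ({0..T} \<times> {0..L}) (\<lambda>(t,x). mx' t x)
    \<and> continuous_on ({0..T} \<times> {0..L}) (\<lambda>(t,x). mxx t x)
    \<and> (\<forall>t\<in>{0<..<T}. \<forall>x\<in>{0<..<L}.
          ut t x + \<sigma>\<^sup>2 / 2 * uxx t x - r * u t x + (Gterm \<epsilon> L ux m t x)\<^sup>2 = 0)
    \<and> (\<forall>t\<in>{0<..<T}. \<forall>x\<in>{0<..<L}.
          ((\<lambda>y. Gterm \<epsilon> L ux m t y * m t y) has_real_derivative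
              (mt t x - \<sigma>\<^sup>2 / 2 * mxx t x)) (at x))
    \<and> (\<forall>x\<in>{0..L}. m 0 x = m0 x \<and> u T x = uT x)
    \<and> (\<forall>t\<in>{0..T}. ux t 0 = 0 \<and> ux t L = 0)
    \<and> (\<forall>t\<in>{0..T}. \<forall>x\<in>{0, L}. \<sigma>\<^sup>2 / 2 * mx' t x + Gterm \<epsilon> L ux m t x * m t x = 0)"
      unfolding classical_solution_def by blast
    interpret S: sol L T r \<epsilon> \<sigma> u m ut ux uxx mt mx' mxx uT m0
      by unfold_locales (use cs h assms(1-4,14-16) in auto)
    have sig1: "\<sigma>\<^sup>2 \<le> 1" using h by (simp add: power_le_one)
    have Qb: "\<sigma>\<^sup>2 / 4 * integral {0..T} S.Q \<le> E0 + (2 * \<bar>B\<bar> + T) / \<sigma>\<^sup>2"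
      using S.Q_bound[OF UB] unfolding E0_def by simp
    have Qt0: "S.Q t \<ge> 0" if "t \<in> {0..T}" for t
      unfolding S.Q_def
    proof (rule integral_nonneg)
      show "(\<lambda>x. (mx' t x)\<^sup>2 / (m t x + 1)) integrable_on {0..L}"
        using slice_cont[OF S.cQq that] by (intro integrable_continuous_interval) (simp add: case_prod_beta)
      fix x assume "x \<in> {0..L}" then show "0 \<le> (mx' t x)\<^sup>2 / (m t x + 1)" using S.m_nonneg[OF that] by simp
    qed
    have Q0: "integral {0..T} S.Q \<ge> 0"
      by (rule integral_nonneg) (use Qt0 S.cQ in \<open>auto intro: integrable_continuous_interval\<close>)
    have "\<sigma>\<^sup>2 * \<sigma>\<^sup>2 * integral {0..T} S.Q = 4 * \<sigma>\<^sup>2 * (\<sigma>\<^sup>2 / 4 * integral {0..T} S.Q)" by simp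
    also have "\<dots> \<le> 4 * \<sigma>\<^sup>2 * (E0 + (2 * \<bar>B\<bar> + T) / \<sigma>\<^sup>2)"
      by (rule mult_left_mono[OF Qb]) simp
    also have "\<dots> = 4 * \<sigma>\<^sup>2 * E0 + 4 * (2 * \<bar>B\<bar> + T)" using h by (simp add: field_simps)
    also have "\<dots> \<le> C0"
    proof -
      have "\<sigma>\<^sup>2 * E0 \<le> \<bar>E0\<bar>"
        using sig1 by (metis abs_ge_self abs_mult abs_of_nonneg mult_left_le_one_le order_trans zero_le_power2 abs_ge_zero)
      then show ?thesis unfolding C0_def by simp
    qed
    finally have main: "\<sigma>\<^sup>2 * \<sigma>\<^sup>2 * integral {0..T} S.Q \<le> C0" .
    have eqQ: "integral {0..T} (\<lambda>t. integral {0..L} (\<lambda>x. \<bar>mx t x\<bar>\<^sup>2 / (m t x + 1))) = integral {0..T} S.Q"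
    proof (rule integral_cong)
      fix t assume t: "t \<in> {0..T}"
      show "integral {0..L} (\<lambda>x. \<bar>mx t x\<bar>\<^sup>2 / (m t x + 1)) = S.Q t"
        unfolding S.Q_def
      proof (rule integral_spike[of "{0, L}"])
        show "negligible {0, L}" by simp
        fix x assume x: "x \<in> {0..L} - {0, L}"
        then have xi: "x \<in> {0<..<L}" by auto
        have "((\<lambda>y. m t y) has_real_derivative mx t x) (at x within {0..L})"
          using h t x by auto
        then have "((\<lambda>y. m t y) has_real_derivative mx t x) (at x)"
          using S.int_at[OF xi] by simp
        moreover have "((\<lambda>y. m t y) has_real_derivative mx' t x) (at x)"
          using S.dmx[of t x] t x S.int_at[OF xi] by simp
        ultimately have "mx t x = mx' t x" by (rule DERIV_unique)
        then show "(mx' t x)\<^sup>2 / (m t x + 1) = \<bar>mx t x\<bar>\<^sup>2 / (m t x + 1)" by simp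
      qed
    qed
    show "\<sigma>\<^sup>2 * sqrt (integral {0..T} (\<lambda>t. integral {0..L} (\<lambda>x. \<bar>mx t x\<bar>\<^sup>2 / (m t x + 1)))) \<le> sqrt C0"
      unfolding eqQ by (rule sig_sqrt[OF Q0 main])
  qed
qed


end
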